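(* Let $\mathcal{H}$ be a complex Hilbert space of finite dimension $n\ge2$ and $m\ge2$. Let $\mathcal{G}=(\{1,\dots,m\},E)$ be a connected undirected graph, and for each edge $(j,k)\in E$ let $U_{(j,k)}$ be the unitary on $\mathcal{H}^{\otimes m}$ swapping tensor factors $j$ and $k$. Let $q_0>0$ and $q_{j,k}>0$ for $(j,k)\in E$ with $q_0+\sum_{(j,k)\in E}q_{j,k}=1$, and define the map on operators of $\mathcal{H}^{\otimes m}$ $$\mathcal{E}(X)=q_0X+\sum_{(j,k)\in E}q_{j,k}\,U_{(j,k)}XU_{(j,k)}^\dagger.$$ Then the set of fixed points of $\mathcal{E}$ (operators $X$ with $\mathcal{E}(X)=X$) coincides with the set of permutation-invariant operators, i.e. those $X$ with $U_\pi X=XU_\pi$ for every permutation $\pi$ of $\{1,\dots,m\}$.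
   Context: For a permutation $\pi$ of $\{1,\dots,m\}$, $U_\pi$ denotes the unitary on $\mathcal{H}^{\otimes m}$ with $U_\pi(X_1\otimes\cdots\otimes X_m)U_\pi^\dagger=X_{\pi(1)}\otimes\cdots\otimes X_{\pi(m)}$ for all operators $X_i$ on $\mathcal{H}$; $U_{(j,k)}$ is $U_\pi$ for the transposition $\pi$ of $j$ and $k$. *)

theory Defs
  imports "HOL-Analysis.Analysis" "HOL-Combinatorics.Permutations"
begin

text \<open>H = complex^'n (dimension CARD('n)); the tensor power H^{\<otimes>m} has the
  standard basis indexed by multi-indices a :: 'm \<Rightarrow> 'n (tensor factors indexed
  by the finite type 'm, with CARD('m) = m).\<close>

type_synonym ('m, 'n) tens_op = "complex^('m \<Rightarrow> 'n)^('m \<Rightarrow> 'n)"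

definition adjoint_op :: "('m::finite, 'n::finite) tens_op \<Rightarrow> ('m, 'n) tens_op" where
  "adjoint_op A = (\<chi> i j. cnj (A $ j $ i))"

definition tensor_op :: "('m::finite \<Rightarrow> complex^'n^'n) \<Rightarrow> ('m, 'n::finite) tens_op" where
  "tensor_op Xs = (\<chi> a b. \<Prod>k\<in>UNIV. Xs k $ a k $ b k)"

text \<open>Permutation unitary: U_\<pi> e_b = e_{b \<circ> \<pi>}, so that
  U_\<pi> (X_1 \<otimes> ... \<otimes> X_m) U_\<pi>^\<dagger> = X_{\<pi> 1} \<otimes> ... \<otimes> X_{\<pi> m}.\<close>
definition perm_op :: "('m::finite \<Rightarrow> 'm) \<Rightarrow> ('m, 'n::finite) tens_op" where
  "perm_op \<pi> = (\<chi> a b. if a = b \<circ> \<pi> then 1 else 0)"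

definition swap_channel ::
  "real \<Rightarrow> ('m \<times> 'm) set \<Rightarrow> ('m \<times> 'm \<Rightarrow> real) \<Rightarrow> ('m::finite, 'n::finite) tens_op \<Rightarrow> ('m, 'n) tens_op" where
  "swap_channel q0 E q X = q0 *\<^sub>R X +
     (\<Sum>e\<in>E. q e *\<^sub>R (perm_op (Transposition.transpose (fst e) (snd e)) ** X ** adjoint_op (perm_op (Transposition.transpose (fst e) (snd e)))))"

text \<open>Sanity check of the convention for U_\<pi> (entry-wise form of the defining property).\<close>
lemma perm_op_conj_tensor_entry:
  fixes \<pi> :: "'m::finite \<Rightarrow> 'm" and Xs :: "'m \<Rightarrow> complex^'n::finite^'n"
  assumes "\<pi> permutes UNIV"
  shows "(\<Prod>k\<in>UNIV. Xs k $ (a \<circ> inv \<pi>) k $ (b \<circ> inv \<pi>) k)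
       = (\<Prod>l\<in>UNIV. Xs (\<pi> l) $ a l $ b l)"
proof -
  have "(\<Prod>k\<in>UNIV. Xs k $ (a \<circ> inv \<pi>) k $ (b \<circ> inv \<pi>) k)
      = (\<Prod>l\<in>UNIV. Xs (\<pi> l) $ (a \<circ> inv \<pi>) (\<pi> l) $ (b \<circ> inv \<pi>) (\<pi> l))"
    using prod.permute[OF assms, of "\<lambda>k. Xs k $ (a \<circ> inv \<pi>) k $ (b \<circ> inv \<pi>) k"]
    by (simp add: comp_def)
  also have "\<dots> = (\<Prod>l\<in>UNIV. Xs (\<pi> l) $ a l $ b l)"
    using permutes_inverses(2)[OF assms] by simp
  finally show ?thesis .
qed

end

theory Submission
  imports Defs
begin

lemma convex_eq:
  fixes x :: "'a::real_inner" and y :: "'b \<Rightarrow> 'a"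
  assumes fin: "finite E" and qp: "\<forall>e\<in>E. q e > 0" and qs: "q0 + sum q E = 1"
    and xe: "x = q0 *\<^sub>R x + (\<Sum>e\<in>E. q e *\<^sub>R y e)"
    and nm: "\<forall>e\<in>E. norm (y e) = norm x"
  shows "\<forall>e\<in>E. y e = x"
proof -
  have "q0 *\<^sub>R x + (\<Sum>e\<in>E. q e *\<^sub>R x) = (q0 + sum q E) *\<^sub>R x"
    by (simp add: scaleR_add_left scaleR_sum_left)
  hence A: "q0 *\<^sub>R x + (\<Sum>e\<in>E. q e *\<^sub>R x) = x" using qs by simp
  have "q0 *\<^sub>R x + (\<Sum>e\<in>E. q e *\<^sub>R y e) = q0 *\<^sub>R x + (\<Sum>e\<in>E. q e *\<^sub>R x)"
    using trans[OF xe[symmetric] A[symmetric]] .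
  hence "(\<Sum>e\<in>E. q e *\<^sub>R y e) = (\<Sum>e\<in>E. q e *\<^sub>R x)"
    by (rule add_left_imp_eq)
  hence s0: "(\<Sum>e\<in>E. q e *\<^sub>R (y e - x)) = 0"
    by (simp add: scaleR_diff_right sum_subtractf)
  have "inner (\<Sum>e\<in>E. q e *\<^sub>R (y e - x)) x = 0" using s0 by simp
  hence s1: "(\<Sum>e\<in>E. q e * (inner (y e) x - inner x x)) = 0"
    by (simp add: inner_sum_left inner_diff_left)
  have le: "\<forall>e\<in>E. q e * (inner (y e) x - inner x x) \<le> 0"
  proof
    fix e assume e: "e \<in> E"
    have "inner (y e) x \<le> norm (y e) * norm x" by (rule norm_cauchy_schwarz)
    also have "\<dots> = inner x x" using nm e by (simp add: power2_norm_eq_inner[symmetric] power2_eq_square)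
    finally show "q e * (inner (y e) x - inner x x) \<le> 0"
      using qp e by (intro mult_nonneg_nonpos) auto
  qed
  have S0: "(\<Sum>e\<in>E. - (q e * (inner (y e) x - inner x x))) = 0" using s1
    by (simp add: sum_negf)
  have NN: "0 \<le> - (q e * (inner (y e) x - inner x x))" if "e \<in> E" for e
    using le that by auto
  have z: "\<forall>e\<in>E. - (q e * (inner (y e) x - inner x x)) = 0"
    using sum_nonneg_0[OF fin NN S0] by blast
  have eq: "\<forall>e\<in>E. inner (y e) x = inner x x"
  proof
    fix e assume e: "e \<in> E"
    have "q e * (inner (y e) x - inner x x) = 0" using z e by simp
    moreover have "q e \<noteq> 0" using qp e by force
    ultimately show "inner (y e) x = inner x x" by simp
  qed
  show ?thesis
  proof
    fix e assume e: "e \<in> E"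
    have "norm (y e) ^ 2 = norm x ^ 2" using nm e by simp
    hence n2: "inner (y e) (y e) = inner x x"
      by (simp only: power2_norm_eq_inner)
    have "inner (y e - x) (y e - x) = inner (y e) (y e) - 2 * inner (y e) x + inner x x"
      by (simp add: inner_diff_left inner_diff_right inner_commute)
    also have "\<dots> = 0" using n2 eq e by (simp del: inner_diff_left inner_diff_right)
    finally show "y e = x" by simp
  qed
qed

lemma perm_op_mult: "perm_op \<sigma> ** perm_op \<tau> = (perm_op (\<tau> \<circ> \<sigma>) :: ('m::finite,'n::finite) tens_op)"
proof -
  have "(\<Sum>b\<in>UNIV. (if a = b \<circ> \<sigma> then 1 else 0) * (if b = c \<circ> \<tau> then 1 else (0::complex)))
      = (if a = c \<circ> \<tau> \<circ> \<sigma> then 1 else 0)" for a c :: "'m \<Rightarrow> 'n"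
  proof -
    have "(\<Sum>b\<in>UNIV. (if a = b \<circ> \<sigma> then 1 else 0) * (if b = c \<circ> \<tau> then 1 else (0::complex)))
       = (\<Sum>b\<in>UNIV. if b = c \<circ> \<tau> then (if a = b \<circ> \<sigma> then 1 else 0) else 0)"
      by (rule sum.cong) auto
    also have "\<dots> = (if a = c \<circ> \<tau> \<circ> \<sigma> then 1 else 0)"
      by (subst sum.delta) (auto simp: comp_assoc)
    finally show ?thesis .
  qed
  thus ?thesis by (simp add: vec_eq_iff matrix_matrix_mult_def perm_op_def comp_assoc)
qed

lemma perm_op_id: "perm_op id = mat 1"
  by (simp add: vec_eq_iff perm_op_def mat_def)

lemma left_mult:
  fixes t :: "'m::finite \<Rightarrow> 'm" and X :: "('m, 'n::finite) tens_op"
  assumes "t \<circ> t = id"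
  shows "(perm_op t ** X) $ a $ c = X $ (a \<circ> t) $ c"
proof -
  have inv: "f \<circ> t \<circ> t = f" for f :: "'m \<Rightarrow> 'n"
    using assms by (simp add: comp_assoc)
  have iff: "(a = b \<circ> t) = (b = a \<circ> t)" for b
    using inv[of a] inv[of b] by auto
  have "(perm_op t ** X) $ a $ c = (\<Sum>b\<in>UNIV. (if a = b \<circ> t then 1 else 0) * X $ b $ c)"
    unfolding matrix_matrix_mult_def perm_op_def by simp
  also have "\<dots> = (\<Sum>b\<in>UNIV. (if b = a \<circ> t then 1 else 0) * X $ b $ c)"
    by (rule sum.cong[OF refl]) (simp only: iff)
  also have "\<dots> = (\<Sum>b\<in>UNIV. if b = a \<circ> t then X $ b $ c else 0)"
    by (rule sum.cong) auto
  also have "\<dots> = X $ (a \<circ> t) $ c" by (subst sum.delta) auto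
  finally show ?thesis .
qed

lemma right_mult:
  shows "(X ** perm_op t) $ a $ d = X $ a $ (d \<circ> t)"
proof -
  have "(X ** perm_op t) $ a $ d = (\<Sum>c\<in>UNIV. X $ a $ c * (if c = d \<circ> t then 1 else 0))"
    unfolding matrix_matrix_mult_def perm_op_def by simp
  also have "\<dots> = (\<Sum>c\<in>UNIV. if c = d \<circ> t then X $ a $ c else 0)"
    by (rule sum.cong) auto
  also have "\<dots> = X $ a $ (d \<circ> t)" by (subst sum.delta) auto
  finally show ?thesis .
qed

lemma adj_perm:
  fixes t :: "'m::finite \<Rightarrow> 'm"
  assumes "t \<circ> t = id"
  shows "adjoint_op (perm_op t) = (perm_op t :: ('m, 'n::finite) tens_op)"
proof -
  have inv: "f \<circ> t \<circ> t = f" for f :: "'m \<Rightarrow> 'n"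
    using assms by (simp add: comp_assoc)
  have iff: "(a = b \<circ> t) = (b = a \<circ> t)" for a b :: "'m \<Rightarrow> 'n"
    using inv[of a] inv[of b] by auto
  have "cnj (if b = a \<circ> t then 1 else 0) = (if a = b \<circ> t then 1 else (0::complex))" for a b :: "'m \<Rightarrow> 'n"
    using iff[of a b] by simp
  thus ?thesis unfolding vec_eq_iff adjoint_op_def perm_op_def by simp
qed

lemma conj_entry:
  fixes t :: "'m::finite \<Rightarrow> 'm" and X :: "('m, 'n::finite) tens_op"
  assumes "t \<circ> t = id"
  shows "(perm_op t ** X ** adjoint_op (perm_op t)) $ a $ b = X $ (a \<circ> t) $ (b \<circ> t)"
  unfolding adj_perm[OF assms] right_mult by (rule left_mult[OF assms])

lemma tr_inv: "Transposition.transpose i j \<circ> Transposition.transpose i j = id"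
  by simp

lemma perm_sq:
  fixes t :: "'m::finite \<Rightarrow> 'm"
  assumes "t \<circ> t = id"
  shows "perm_op t ** perm_op t = (mat 1 :: ('m, 'n::finite) tens_op)"
  by (simp add: perm_op_mult assms perm_op_id)

lemma conj_iff:
  fixes t :: "'m::finite \<Rightarrow> 'm" and X :: "('m, 'n::finite) tens_op"
  assumes tt: "t \<circ> t = id"
  shows "(perm_op t ** X ** adjoint_op (perm_op t) = X) \<longleftrightarrow> perm_op t ** X = X ** perm_op t"
proof
  assume h: "perm_op t ** X ** adjoint_op (perm_op t) = X"
  have "perm_op t ** X = perm_op t ** X ** (perm_op t ** perm_op t)"
    by (simp add: perm_sq[OF tt])
  also have "\<dots> = (perm_op t ** X ** perm_op t) ** perm_op t"
    by (simp add: matrix_mul_assoc)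
  also have "\<dots> = X ** perm_op t" using h by (simp add: adj_perm[OF tt])
  finally show "perm_op t ** X = X ** perm_op t" .
next
  assume h: "perm_op t ** X = X ** perm_op t"
  have "perm_op t ** X ** adjoint_op (perm_op t) = X ** (perm_op t ** perm_op t)"
    by (simp add: adj_perm[OF tt] h matrix_mul_assoc)
  also have "\<dots> = X" by (simp add: perm_sq[OF tt])
  finally show "perm_op t ** X ** adjoint_op (perm_op t) = X" .
qed

lemma comm_comp:
  fixes X :: "('m::finite, 'n::finite) tens_op"
  assumes "perm_op s ** X = X ** perm_op s" "perm_op t ** X = X ** perm_op t"
  shows "perm_op (t \<circ> s) ** X = X ** perm_op (t \<circ> s)"
proof -
  have "perm_op (t \<circ> s) ** X = perm_op s ** (perm_op t ** X)"
    by (simp add: perm_op_mult[symmetric] matrix_mul_assoc)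
  also have "\<dots> = (perm_op s ** X) ** perm_op t" by (simp add: assms(2) matrix_mul_assoc)
  also have "\<dots> = X ** (perm_op s ** perm_op t)" by (simp add: assms(1) matrix_mul_assoc)
  also have "\<dots> = X ** perm_op (t \<circ> s)" by (simp add: perm_op_mult)
  finally show ?thesis .
qed

lemma norm_conj:
  fixes t :: "'m::finite \<Rightarrow> 'm" and X :: "('m, 'n::finite) tens_op"
  assumes tt: "t \<circ> t = id"
  shows "norm (perm_op t ** X ** adjoint_op (perm_op t)) = norm X"
proof -
  have inv: "f \<circ> t \<circ> t = f" for f :: "'m \<Rightarrow> 'n"
    using tt by (simp add: comp_assoc)
  have "inner (perm_op t ** X ** adjoint_op (perm_op t)) (perm_op t ** X ** adjoint_op (perm_op t))
     = (\<Sum>a\<in>UNIV. \<Sum>b\<in>UNIV. inner (X $ (a \<circ> t) $ (b \<circ> t)) (X $ (a \<circ> t) $ (b \<circ> t)))"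
    by (simp add: inner_vec_def conj_entry[OF tt])
  also have "\<dots> = (\<Sum>a\<in>UNIV. \<Sum>b\<in>UNIV. inner (X $ a $ (b \<circ> t)) (X $ a $ (b \<circ> t)))"
    by (rule sum.reindex_bij_witness[of _ "\<lambda>a. a \<circ> t" "\<lambda>a. a \<circ> t"]) (simp_all add: inv)
  also have "\<dots> = (\<Sum>a\<in>UNIV. \<Sum>b\<in>UNIV. inner (X $ a $ b) (X $ a $ b))"
    by (rule sum.cong[OF refl], rule sum.reindex_bij_witness[of _ "\<lambda>a. a \<circ> t" "\<lambda>a. a \<circ> t"]) (simp_all add: inv)
  also have "\<dots> = inner X X" by (simp add: inner_vec_def)
  finally show ?thesis by (simp add: norm_eq_sqrt_inner)
qed

theorem lemma1:
  fixes E :: "('m::finite \<times> 'm) set"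
    and q0 :: real and q :: "'m \<times> 'm \<Rightarrow> real"
  assumes n_ge: "CARD('n::finite) \<ge> 2"
    and m_ge: "CARD('m) \<ge> 2"
    and loopfree: "\<forall>(j, k)\<in>E. j \<noteq> k"
    and undirected: "\<forall>(j, k)\<in>E. (k, j) \<notin> E"
    and connected: "\<forall>j k. (j, k) \<in> (E \<union> E\<inverse>)\<^sup>*"
    and q0_pos: "q0 > 0"
    and q_pos: "\<forall>e\<in>E. q e > 0"
    and q_sum: "q0 + (\<Sum>e\<in>E. q e) = 1"
  shows "{X :: ('m, 'n) tens_op. swap_channel q0 E q X = X} =
         {X. \<forall>\<pi>. \<pi> permutes (UNIV :: 'm set) \<longrightarrow> perm_op \<pi> ** X = X ** perm_op \<pi>}"
proof (intro set_eqI iffI; simp only: mem_Collect_eq)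
  fix X :: "('m, 'n) tens_op"
  let ?T = "\<lambda>e::'m\<times>'m. Transposition.transpose (fst e) (snd e)"
  let ?y = "\<lambda>e. perm_op (?T e) ** X ** adjoint_op (perm_op (?T e))"
  {
    assume fx: "swap_channel q0 E q X = X"
    have "\<forall>e\<in>E. ?y e = X"
    proof (rule convex_eq)
      show "finite E" by simp
      show "\<forall>e\<in>E. q e > 0" by (rule q_pos)
      show "q0 + sum q E = 1" by (rule q_sum)
      show "X = q0 *\<^sub>R X + (\<Sum>e\<in>E. q e *\<^sub>R ?y e)"
        using fx[symmetric] by (simp only: swap_channel_def)
      show "\<forall>e\<in>E. norm (?y e) = norm X"
        by (simp add: norm_conj)
    qed
    hence edge: "perm_op (Transposition.transpose j k) ** X = X ** perm_op (Transposition.transpose j k)"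
      if "(j, k) \<in> E" for j k
      using that conj_iff[OF tr_inv] by force
    define S where "S = {p. perm_op p ** X = X ** perm_op p}"
    have idS: "id \<in> S" by (simp add: S_def perm_op_id)
    have edgeS: "Transposition.transpose j k \<in> S" if "(j, k) \<in> E \<union> E\<inverse>" for j k
    proof -
      have "(j, k) \<in> E \<or> (k, j) \<in> E" using that by auto
      thus ?thesis
      proof
        assume "(j, k) \<in> E" thus ?thesis using edge unfolding S_def by blast
      next
        assume "(k, j) \<in> E"
        hence "perm_op (Transposition.transpose k j) ** X = X ** perm_op (Transposition.transpose k j)"
          by (rule edge)
        thus ?thesis unfolding S_def by (simp add: transpose_commute)
      qed
    qed
    have compS: "t \<circ> s \<in> S" if "s \<in> S" "t \<in> S" for s t
      using that comm_comp unfolding S_def by blast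
    have trS: "Transposition.transpose j k \<in> S" for j k
    proof -
      have "(j, k) \<in> (E \<union> E\<inverse>)\<^sup>*" using connected by blast
      thus ?thesis
      proof (induction rule: rtrancl_induct)
        case base
        then show ?case using idS by (simp add: id_def)
      next
        case (step k l)
        have kl: "k \<noteq> l" using step.hyps(2) loopfree by auto
        have eS: "Transposition.transpose k l \<in> S" using edgeS step.hyps(2) by blast
        show ?case
        proof (cases "j = l")
          case True then show ?thesis using idS by (simp add: id_def)
        next
          case jl: False
          show ?thesis
          proof (cases "j = k")
            case True then show ?thesis using eS by simp
          next
            case jk: False
            have "Transposition.transpose j l = Transposition.transpose k l \<circ> Transposition.transpose j k \<circ> Transposition.transpose k l"
              using jl jk kl by (auto simp: Transposition.transpose_def fun_eq_iff)
            thus ?thesis using compS eS step.IH by metis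
          qed
        qed
      qed
    qed
    show "\<forall>\<pi>. \<pi> permutes (UNIV :: 'm set) \<longrightarrow> perm_op \<pi> ** X = X ** perm_op \<pi>"
    proof (intro allI impI)
      fix \<pi> :: "'m \<Rightarrow> 'm" assume p: "\<pi> permutes UNIV"
      have fU: "finite (UNIV :: 'm set)" by simp
      have "\<pi> \<in> S" using p fU
      proof (induction rule: permutes_induct)
        case id then show ?case by (rule idS)
      next
        case (swap a b p) then show ?case using compS trS by blast
      qed
      thus "perm_op \<pi> ** X = X ** perm_op \<pi>" by (simp add: S_def)
    qed
  }
  {
    assume h: "\<forall>\<pi>. \<pi> permutes (UNIV :: 'm set) \<longrightarrow> perm_op \<pi> ** X = X ** perm_op \<pi>"
    have "?y e = X" for e
    proof -
      have "perm_op (?T e) ** X = X ** perm_op (?T e)"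
        using h permutes_swap_id[of "fst e" UNIV "snd e"] by blast
      thus ?thesis using conj_iff[OF tr_inv, of "fst e" "snd e" X] by blast
    qed
    hence "swap_channel q0 E q X = q0 *\<^sub>R X + (\<Sum>e\<in>E. q e *\<^sub>R X)"
      by (simp add: swap_channel_def)
    also have "\<dots> = (q0 + sum q E) *\<^sub>R X" by (simp add: scaleR_add_left scaleR_sum_left)
    also have "\<dots> = X" using q_sum by simp
    finally show "swap_channel q0 E q X = X" .
  }
qed

end
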